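(* Let $X,Y$ be finite sets with $\max\{|X|,|Y|\}\le N$, $c\in\mathbb R_+^{X\times Y}$, and $\mu=r/M\in\mathcal P(X)$, $\nu=s/M\in\mathcal P(Y)$ for a positive integer $M$ and $r\in\mathbb Z_{++}^X$, $s\in\mathbb Z_{++}^Y$. Let $\varepsilon_1>\varepsilon_2>0$ and let $(\alpha_a,\beta_a)$ be maximizers of $J_{\varepsilon_a}$, $a=1,2$. Run the asynchronous Sinkhorn iteration with parameter $\varepsilon=\varepsilon_2$ initialized with $v^{(0)}=\exp(\beta_1/\varepsilon_2)$. Then for every $q_{\mathrm{target}}\in(0,1)$ there exists $$n\le2+\frac{\varepsilon_1}{\varepsilon_2}\cdot\frac{N(4\log N+24\log M)+\log M}{1-q_{\mathrm{target}}}$$ with $q^{(n)}\ge q_{\mathrm{target}}$.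
   Context: For $\varepsilon>0$, $K_\varepsilon(x,y)=\exp(-c(x,y)/\varepsilon)\mu(x)\nu(y)$ and $J_\varepsilon(\alpha,\beta)=\langle\alpha,\mu\rangle+\langle\beta,\nu\rangle-\varepsilon\sum_{x,y}K_\varepsilon(x,y)(\exp((\alpha(x)+\beta(y))/\varepsilon)-1)$. Asynchronous Sinkhorn iteration with parameter $\varepsilon$ and kernel $K=K_\varepsilon$: given $v^{(0)}\in\mathbb R_{++}^Y$, for $\ell\ge0$: $u^{(\ell+1)}=\mu\oslash(Kv^{(\ell)})$, $\hat v^{(\ell+1)}=\nu\oslash(K^\top u^{(\ell+1)})$, $v^{(\ell+1)}=\min\{v^{(\ell)},\hat v^{(\ell+1)}\}$ componentwise, $\pi^{(\ell+1)}=\mathrm{diag}(u^{(\ell+1)})K\mathrm{diag}(v^{(\ell+1)})$, $q^{(\ell+1)}=\sum_{x,y}\pi^{(\ell+1)}(x,y)$; $\oslash$ is componentwise division. *)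

theory Defs
  imports Complex_Main
begin

definition Kern :: "real \<Rightarrow> ('x \<Rightarrow> 'y \<Rightarrow> real) \<Rightarrow> ('x \<Rightarrow> real) \<Rightarrow> ('y \<Rightarrow> real) \<Rightarrow> 'x \<Rightarrow> 'y \<Rightarrow> real" where
  "Kern eps c \<mu> \<nu> x y = exp (- c x y / eps) * \<mu> x * \<nu> y"

definition Jfun :: "real \<Rightarrow> ('x::finite \<Rightarrow> 'y::finite \<Rightarrow> real) \<Rightarrow> ('x \<Rightarrow> real) \<Rightarrow> ('y \<Rightarrow> real)
    \<Rightarrow> ('x \<Rightarrow> real) \<Rightarrow> ('y \<Rightarrow> real) \<Rightarrow> real" where
  "Jfun eps c \<mu> \<nu> \<alpha> \<beta> =
     (\<Sum>x\<in>UNIV. \<alpha> x * \<mu> x) + (\<Sum>y\<in>UNIV. \<beta> y * \<nu> y)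
     - eps * (\<Sum>x\<in>UNIV. \<Sum>y\<in>UNIV. Kern eps c \<mu> \<nu> x y * (exp ((\<alpha> x + \<beta> y) / eps) - 1))"

definition sk_u :: "('x::finite \<Rightarrow> 'y::finite \<Rightarrow> real) \<Rightarrow> ('x \<Rightarrow> real) \<Rightarrow> ('y \<Rightarrow> real) \<Rightarrow> 'x \<Rightarrow> real" where
  "sk_u K \<mu> v = (\<lambda>x. \<mu> x / (\<Sum>y\<in>UNIV. K x y * v y))"

definition sk_step :: "('x::finite \<Rightarrow> 'y::finite \<Rightarrow> real) \<Rightarrow> ('x \<Rightarrow> real) \<Rightarrow> ('y \<Rightarrow> real) \<Rightarrow> ('y \<Rightarrow> real) \<Rightarrow> 'y \<Rightarrow> real" where
  "sk_step K \<mu> \<nu> v = (\<lambda>y. min (v y) (\<nu> y / (\<Sum>x\<in>UNIV. K x y * sk_u K \<mu> v x)))"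

primrec sk_v :: "('x::finite \<Rightarrow> 'y::finite \<Rightarrow> real) \<Rightarrow> ('x \<Rightarrow> real) \<Rightarrow> ('y \<Rightarrow> real) \<Rightarrow> ('y \<Rightarrow> real) \<Rightarrow> nat \<Rightarrow> 'y \<Rightarrow> real" where
  "sk_v K \<mu> \<nu> v0 0 = v0"
| "sk_v K \<mu> \<nu> v0 (Suc l) = sk_step K \<mu> \<nu> (sk_v K \<mu> \<nu> v0 l)"

text \<open>u^(l+1) = mu / (K v^(l)).\<close>
definition sk_uu :: "('x::finite \<Rightarrow> 'y::finite \<Rightarrow> real) \<Rightarrow> ('x \<Rightarrow> real) \<Rightarrow> ('y \<Rightarrow> real) \<Rightarrow> ('y \<Rightarrow> real) \<Rightarrow> nat \<Rightarrow> 'x \<Rightarrow> real" where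
  "sk_uu K \<mu> \<nu> v0 l = sk_u K \<mu> (sk_v K \<mu> \<nu> v0 l)"

text \<open>q^(l+1) = total mass of diag(u^(l+1)) K diag(v^(l+1)) (meaningful for index n = l+1 >= 1).\<close>
definition sk_q :: "('x::finite \<Rightarrow> 'y::finite \<Rightarrow> real) \<Rightarrow> ('x \<Rightarrow> real) \<Rightarrow> ('y \<Rightarrow> real) \<Rightarrow> ('y \<Rightarrow> real) \<Rightarrow> nat \<Rightarrow> real" where
  "sk_q K \<mu> \<nu> v0 n =
     (\<Sum>x\<in>UNIV. \<Sum>y\<in>UNIV. sk_uu K \<mu> \<nu> v0 (n - 1) x * K x y * sk_v K \<mu> \<nu> v0 n y)"

end

theory Submission
  imports Defs "HOL-Analysis.Analysis"
begin


lemma Jfun_swap: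
  "Jfun eps c \<mu> \<nu> \<alpha> \<beta> = Jfun eps (\<lambda>y x. c x y) \<nu> \<mu> \<beta> \<alpha>"
  unfolding Jfun_def Kern_def
  by (subst sum.swap[of _ "UNIV::'b set"]) (simp add: algebra_simps)


lemma Kern_exp:
  "Kern eps c \<mu> \<nu> x y * exp ((a + \<beta>) / eps) = \<mu> x * (\<nu> y * exp ((a + \<beta> - c x y) / eps))"
proof -
  have "exp ((a + \<beta> - c x y) / eps) = exp (- c x y / eps) * exp ((a + \<beta>) / eps)"
    by (simp add: exp_add[symmetric] diff_divide_distrib)
  thus ?thesis unfolding Kern_def by simp
qed

lemma aux_lin: "(A::real) + Y + B - eps * (D + X) = A + B - eps * D + (Y - eps * X)"
  by (simp add: algebra_simps)

lemma opt_row: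
  fixes c :: "'x::finite \<Rightarrow> 'y::finite \<Rightarrow> real"
  assumes eps: "eps > 0" and mu: "\<And>x. \<mu> x > 0" and nu: "\<And>y. \<nu> y > 0"
    and mx: "\<And>\<alpha>' \<beta>'. Jfun eps c \<mu> \<nu> \<alpha>' \<beta>' \<le> Jfun eps c \<mu> \<nu> \<alpha> \<beta>"
  shows "(\<Sum>y\<in>UNIV. \<nu> y * exp ((\<alpha> x + \<beta> y - c x y) / eps)) = 1"
proof -
  define T where "T = (\<Sum>y\<in>UNIV. \<nu> y * exp ((\<alpha> x + \<beta> y - c x y) / eps))"
  have Tpos: "T > 0" unfolding T_def
    by (intro sum_pos) (auto intro: mult_pos_pos nu)
  have key: "t * \<mu> x - eps * (\<mu> x * T * (exp (t/eps) - 1)) \<le> 0" for t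
  proof -
    define h where "h = (\<lambda>x'. if x' = x then t else 0)"
    define \<alpha>' where "\<alpha>' = (\<lambda>x'. \<alpha> x' + h x')"
    have a: "(\<Sum>x'\<in>UNIV. \<alpha>' x' * \<mu> x') = (\<Sum>x'\<in>UNIV. \<alpha> x' * \<mu> x') + t * \<mu> x"
    proof -
      have "(\<Sum>x'\<in>UNIV. \<alpha>' x' * \<mu> x') = (\<Sum>x'\<in>UNIV. \<alpha> x' * \<mu> x' + h x' * \<mu> x')"
        unfolding \<alpha>'_def by (simp add: distrib_right)
      also have "\<dots> = (\<Sum>x'\<in>UNIV. \<alpha> x' * \<mu> x') + (\<Sum>x'\<in>UNIV. h x' * \<mu> x')"
        by (rule sum.distrib)
      also have "(\<Sum>x'\<in>UNIV. h x' * \<mu> x') = t * \<mu> x"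
      proof -
        have "(\<Sum>x'\<in>UNIV. h x' * \<mu> x') = (\<Sum>x'\<in>UNIV. if x' = x then t * \<mu> x else 0)"
          by (intro sum.cong) (auto simp: h_def)
        thus ?thesis by simp
      qed
      finally show ?thesis .
    qed
    have pt: "(\<Sum>y\<in>UNIV. Kern eps c \<mu> \<nu> x' y * (exp ((\<alpha>' x' + \<beta> y) / eps) - 1))
             = (\<Sum>y\<in>UNIV. Kern eps c \<mu> \<nu> x' y * (exp ((\<alpha> x' + \<beta> y) / eps) - 1))
             + (if x' = x then \<mu> x * T * (exp (t/eps) - 1) else 0)" for x'
    proof (cases "x' = x")
      case True
      have "Kern eps c \<mu> \<nu> x y * (exp ((\<alpha> x + t + \<beta> y) / eps) - 1)
           = Kern eps c \<mu> \<nu> x y * (exp ((\<alpha> x + \<beta> y) / eps) - 1)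
             + \<mu> x * (\<nu> y * exp ((\<alpha> x + \<beta> y - c x y) / eps)) * (exp (t/eps) - 1)" for y
      proof -
        have "exp ((\<alpha> x + t + \<beta> y) / eps) = exp ((\<alpha> x + \<beta> y) / eps) * exp (t/eps)"
          by (simp add: exp_add[symmetric] add_divide_distrib add_ac)
        thus ?thesis using Kern_exp[of eps c \<mu> \<nu> x y "\<alpha> x" "\<beta> y"]
          by (simp add: algebra_simps)
      qed
      hence "(\<Sum>y\<in>UNIV. Kern eps c \<mu> \<nu> x y * (exp ((\<alpha> x + t + \<beta> y) / eps) - 1))
         = (\<Sum>y\<in>UNIV. Kern eps c \<mu> \<nu> x y * (exp ((\<alpha> x + \<beta> y) / eps) - 1)
             + \<mu> x * (\<nu> y * exp ((\<alpha> x + \<beta> y - c x y) / eps)) * (exp (t/eps) - 1))"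
        by (intro sum.cong) auto
      also have "\<dots> = (\<Sum>y\<in>UNIV. Kern eps c \<mu> \<nu> x y * (exp ((\<alpha> x + \<beta> y) / eps) - 1))
             + \<mu> x * T * (exp (t/eps) - 1)"
        unfolding T_def by (simp add: sum.distrib sum_distrib_left sum_distrib_right)
      finally show ?thesis using True by (simp add: \<alpha>'_def h_def)
    next
      case False then show ?thesis by (simp add: \<alpha>'_def h_def)
    qed
    have b: "(\<Sum>x'\<in>UNIV. \<Sum>y\<in>UNIV. Kern eps c \<mu> \<nu> x' y * (exp ((\<alpha>' x' + \<beta> y) / eps) - 1))
         = (\<Sum>x'\<in>UNIV. \<Sum>y\<in>UNIV. Kern eps c \<mu> \<nu> x' y * (exp ((\<alpha> x' + \<beta> y) / eps) - 1))
           + \<mu> x * T * (exp (t/eps) - 1)"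
      unfolding pt by (simp add: sum.distrib)
    have e1: "Jfun eps c \<mu> \<nu> \<alpha>' \<beta> = Jfun eps c \<mu> \<nu> \<alpha> \<beta> +
       (t * \<mu> x - eps * (\<mu> x * T * (exp (t/eps) - 1)))"
      unfolding Jfun_def a b by (rule aux_lin)
    show ?thesis using mx[of \<alpha>' \<beta>] e1 by linarith
  qed
  have "(- eps * ln T) * \<mu> x - eps * (\<mu> x * T * (exp ((- eps * ln T)/eps) - 1)) \<le> 0"
    by (rule key)
  moreover have "exp ((- eps * ln T)/eps) = 1 / T" using eps Tpos
  proof -
    have "(- eps * ln T)/eps = - ln T" using eps by simp
    thus ?thesis using Tpos by (simp add: exp_minus exp_ln inverse_eq_divide)
  qed
  ultimately have "\<mu> x * eps * (- ln T - 1 + T) \<le> 0" using Tpos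
    by (simp add: algebra_simps)
  hence "- ln T - 1 + T \<le> 0" using mu[of x] eps
    by (simp add: mult_le_0_iff)
  moreover have "ln T \<le> T - 1" using Tpos by (rule ln_le_minus_one)
  ultimately have "ln T = T - 1" by linarith
  thus ?thesis using ln_eq_minus_one Tpos T_def by blast
qed


lemma opt_col:
  fixes c :: "'x::finite \<Rightarrow> 'y::finite \<Rightarrow> real"
  assumes eps: "eps > 0" and mu: "\<And>x. \<mu> x > 0" and nu: "\<And>y. \<nu> y > 0"
    and mx: "\<And>\<alpha>' \<beta>'. Jfun eps c \<mu> \<nu> \<alpha>' \<beta>' \<le> Jfun eps c \<mu> \<nu> \<alpha> \<beta>"
  shows "(\<Sum>x\<in>UNIV. \<mu> x * exp ((\<alpha> x + \<beta> y - c x y) / eps)) = 1"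
proof -
  have mx': "Jfun eps (\<lambda>y x. c x y) \<nu> \<mu> b a \<le> Jfun eps (\<lambda>y x. c x y) \<nu> \<mu> \<beta> \<alpha>" for a b
    using mx[of a b] unfolding Jfun_swap[of eps c \<mu> \<nu> a b] Jfun_swap[of eps c \<mu> \<nu> \<alpha> \<beta>] .
  have "(\<Sum>x\<in>UNIV. \<mu> x * exp ((\<beta> y + \<alpha> x - c x y) / eps)) = 1"
    using opt_row[of eps \<nu> \<mu> "\<lambda>y x. c x y" \<beta> \<alpha> y, OF eps nu mu mx'] by simp
  thus ?thesis by (simp add: add.commute)
qed


definition Phi :: "('x::finite \<Rightarrow> 'y::finite \<Rightarrow> real) \<Rightarrow> ('x \<Rightarrow> real) \<Rightarrow> ('y \<Rightarrow> real) \<Rightarrow> real" where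
  "Phi K \<mu> v = (\<Sum>x\<in>UNIV. \<mu> x * ln (\<Sum>y\<in>UNIV. K x y * v y))"

locale sk_setting =
  fixes K :: "'x::finite \<Rightarrow> 'y::finite \<Rightarrow> real" and \<mu> :: "'x \<Rightarrow> real" and \<nu> :: "'y \<Rightarrow> real"
    and w :: "'y \<Rightarrow> real" and us :: "'x \<Rightarrow> real"
  assumes Kpos: "\<And>x y. K x y > 0" and mupos: "\<And>x. \<mu> x > 0" and nupos: "\<And>y. \<nu> y > 0"
    and musum: "(\<Sum>x\<in>UNIV. \<mu> x) = 1"
    and wpos: "\<And>y. w y > 0" and uspos: "\<And>x. us x > 0"
    and hw: "\<And>x. us x * (\<Sum>y\<in>UNIV. K x y * w y) = \<mu> x"
    and hu: "\<And>y. w y * (\<Sum>x\<in>UNIV. K x y * us x) = \<nu> y"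
begin

lemma Kv_ge: assumes "\<And>y. v y \<ge> w y"
  shows "(\<Sum>y\<in>UNIV. K x y * v y) \<ge> (\<Sum>y\<in>UNIV. K x y * w y)"
  by (intro sum_mono mult_left_mono assms) (auto intro: less_imp_le Kpos)

lemma Kw_pos: "(\<Sum>y\<in>UNIV. K x y * w y) > 0"
  by (intro sum_pos) (auto intro: mult_pos_pos Kpos wpos)

lemma Kv_pos: assumes "\<And>y. v y \<ge> w y" shows "(\<Sum>y\<in>UNIV. K x y * v y) > 0"
  using Kv_ge[OF assms, of x] Kw_pos[of x] by linarith

lemma step_ge: assumes ge: "\<And>y. v y \<ge> w y"
  shows "sk_step K \<mu> \<nu> v y \<ge> w y"
proof -
  let ?u = "sk_u K \<mu> v"
  have ule: "?u x \<le> us x" for x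
  proof -
    have "us x = \<mu> x / (\<Sum>y\<in>UNIV. K x y * w y)" using hw[of x] Kw_pos[of x]
      by (simp add: eq_divide_eq)
    moreover have "\<mu> x / (\<Sum>y\<in>UNIV. K x y * v y) \<le> \<mu> x / (\<Sum>y\<in>UNIV. K x y * w y)"
      using Kv_ge[OF ge, of x] Kw_pos[of x] mupos[of x]
      by (intro divide_left_mono) (auto intro: less_imp_le mult_pos_pos)
    ultimately show ?thesis unfolding sk_u_def by simp
  qed
  have upos: "?u x > 0" for x unfolding sk_u_def using mupos[of x] Kv_pos[OF ge, of x] by simp
  have s1: "(\<Sum>x\<in>UNIV. K x y * ?u x) \<le> (\<Sum>x\<in>UNIV. K x y * us x)"
    by (intro sum_mono mult_left_mono ule) (auto intro: less_imp_le Kpos)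
  have s0: "(\<Sum>x\<in>UNIV. K x y * ?u x) > 0"
    by (intro sum_pos) (auto intro: mult_pos_pos Kpos upos)
  have "w y = \<nu> y / (\<Sum>x\<in>UNIV. K x y * us x)"
    using hu[of y] s0 s1 by (simp add: eq_divide_eq)
  also have "\<dots> \<le> \<nu> y / (\<Sum>x\<in>UNIV. K x y * ?u x)"
    using s0 s1 nupos[of y] by (intro divide_left_mono) (auto intro: less_imp_le mult_pos_pos)
  finally show ?thesis unfolding sk_step_def using ge[of y] by simp
qed

lemma skv_ge: assumes "\<And>y. v0 y \<ge> w y" shows "sk_v K \<mu> \<nu> v0 n y \<ge> w y"
  using assms by (induction n arbitrary: y) (auto intro: step_ge)

lemma Phi_mono: assumes ge: "\<And>y. v y \<ge> w y" shows "Phi K \<mu> v \<ge> Phi K \<mu> w"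
  unfolding Phi_def
proof (intro sum_mono mult_left_mono)
  fix x
  show "ln (\<Sum>y\<in>UNIV. K x y * w y) \<le> ln (\<Sum>y\<in>UNIV. K x y * v y)"
    using Kv_ge[OF ge, of x] Kw_pos[of x] by simp
  show "0 \<le> \<mu> x" using mupos[of x] by simp
qed

lemma dec: assumes ge: "\<And>y. v y \<ge> w y"
  shows "1 - (\<Sum>x\<in>UNIV. \<Sum>y\<in>UNIV. sk_u K \<mu> v x * K x y * sk_step K \<mu> \<nu> v y)
     \<le> Phi K \<mu> v - Phi K \<mu> (sk_step K \<mu> \<nu> v)"
proof -
  let ?v' = "sk_step K \<mu> \<nu> v"
  define a where "a x = (\<Sum>y\<in>UNIV. K x y * v y)" for x
  define b where "b x = (\<Sum>y\<in>UNIV. K x y * ?v' y)" for x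
  have ge': "\<And>y. ?v' y \<ge> w y" by (rule step_ge[OF ge])
  have apos: "a x > 0" for x unfolding a_def by (rule Kv_pos[OF ge])
  have bpos: "b x > 0" for x unfolding b_def by (rule Kv_pos[OF ge'])
  have q: "(\<Sum>x\<in>UNIV. \<Sum>y\<in>UNIV. sk_u K \<mu> v x * K x y * ?v' y) = (\<Sum>x\<in>UNIV. \<mu> x * (b x / a x))"
  proof (rule sum.cong[OF refl])
    fix x
    have "(\<Sum>y\<in>UNIV. sk_u K \<mu> v x * K x y * ?v' y) = sk_u K \<mu> v x * b x"
      unfolding b_def by (simp add: sum_distrib_left mult.assoc)
    thus "(\<Sum>y\<in>UNIV. sk_u K \<mu> v x * K x y * ?v' y) = \<mu> x * (b x / a x)"
      unfolding sk_u_def a_def by simp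
  qed
  have pt: "\<mu> x * (1 - b x / a x) \<le> \<mu> x * ln (a x) - \<mu> x * ln (b x)" for x
  proof -
    have "ln (b x / a x) \<le> b x / a x - 1" using apos bpos by (intro ln_le_minus_one) simp
    hence "1 - b x / a x \<le> ln (a x) - ln (b x)" using apos[of x] bpos[of x] by (simp add: ln_div)
    hence "\<mu> x * (1 - b x / a x) \<le> \<mu> x * (ln (a x) - ln (b x))"
      using mupos[of x] by (intro mult_left_mono) auto
    thus ?thesis by (simp add: algebra_simps)
  qed
  have "1 - (\<Sum>x\<in>UNIV. \<mu> x * (b x / a x)) = (\<Sum>x\<in>UNIV. \<mu> x * (1 - b x / a x))"
    using musum by (simp add: algebra_simps sum_subtractf)
  also have "\<dots> \<le> (\<Sum>x\<in>UNIV. \<mu> x * ln (a x) - \<mu> x * ln (b x))"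
    by (intro sum_mono pt)
  also have "\<dots> = Phi K \<mu> v - Phi K \<mu> ?v'"
    unfolding Phi_def a_def b_def by (simp add: sum_subtractf)
  finally show ?thesis using q by simp
qed

lemma tele: assumes ge: "\<And>y. v0 y \<ge> w y"
  shows "(\<Sum>l<m. 1 - sk_q K \<mu> \<nu> v0 (Suc l)) \<le> Phi K \<mu> v0 - Phi K \<mu> (sk_v K \<mu> \<nu> v0 m)"
proof (induction m)
  case 0 then show ?case by simp
next
  case (Suc m)
  have "1 - sk_q K \<mu> \<nu> v0 (Suc m) \<le> Phi K \<mu> (sk_v K \<mu> \<nu> v0 m) - Phi K \<mu> (sk_v K \<mu> \<nu> v0 (Suc m))"
    unfolding sk_q_def sk_uu_def using dec[OF skv_ge[OF ge, of _ m]] by simp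
  with Suc show ?case by simp
qed

end



lemma split_UNIV: "sum f (UNIV::'a::finite set) = sum f A + sum f (-A)"
proof -
  have "UNIV = A \<union> -A" by auto
  hence "sum f (UNIV::'a set) = sum f (A \<union> -A)" by simp
  also have "\<dots> = sum f A + sum f (-A)" by (rule sum.union_disjoint) auto
  finally show ?thesis .
qed

lemma balance:
  fixes P :: "'x::finite \<Rightarrow> 'y::finite \<Rightarrow> real"
  assumes row: "\<And>x. (\<Sum>y\<in>UNIV. P x y) = \<mu> x" and col: "\<And>y. (\<Sum>x\<in>UNIV. P x y) = \<nu> y"
  shows "(\<Sum>x\<in>-Q. \<Sum>y\<in>R. P x y) - (\<Sum>x\<in>Q. \<Sum>y\<in>-R. P x y) = (\<Sum>y\<in>R. \<nu> y) - (\<Sum>x\<in>Q. \<mu> x)"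
proof -
  have "(\<Sum>y\<in>R. \<nu> y) = (\<Sum>y\<in>R. (\<Sum>x\<in>Q. P x y) + (\<Sum>x\<in>-Q. P x y))"
    by (intro sum.cong) (auto simp: col[symmetric] split_UNIV[where A=Q])
  also have "\<dots> = (\<Sum>x\<in>Q. \<Sum>y\<in>R. P x y) + (\<Sum>x\<in>-Q. \<Sum>y\<in>R. P x y)"
    by (simp add: sum.distrib sum.swap[of _ R])
  finally have 1: "(\<Sum>y\<in>R. \<nu> y) = (\<Sum>x\<in>Q. \<Sum>y\<in>R. P x y) + (\<Sum>x\<in>-Q. \<Sum>y\<in>R. P x y)" .
  have "(\<Sum>x\<in>Q. \<mu> x) = (\<Sum>x\<in>Q. (\<Sum>y\<in>R. P x y) + (\<Sum>y\<in>-R. P x y))"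
    by (intro sum.cong) (auto simp: row[symmetric] split_UNIV[where A=R])
  also have "\<dots> = (\<Sum>x\<in>Q. \<Sum>y\<in>R. P x y) + (\<Sum>x\<in>Q. \<Sum>y\<in>-R. P x y)"
    by (simp add: sum.distrib)
  finally have 2: "(\<Sum>x\<in>Q. \<mu> x) = (\<Sum>x\<in>Q. \<Sum>y\<in>R. P x y) + (\<Sum>x\<in>Q. \<Sum>y\<in>-R. P x y)" .
  show ?thesis using 1 2 by simp
qed

lemma slack_lb:
  fixes s :: "'x::finite \<Rightarrow> 'y::finite \<Rightarrow> real"
  assumes row: "(\<Sum>y\<in>UNIV. \<nu> y * exp (- s x y / e)) = 1"
    and nu: "\<And>y. \<nu> y \<ge> 1 / m" and m: "m > 0" and e: "e > 0"
  shows "- s x y \<le> e * ln m"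
proof -
  have nupos: "\<nu> y' > 0" for y' using nu[of y'] m by (meson less_le_trans zero_less_divide_1_iff)
  have "\<nu> y * exp (- s x y / e) \<le> (\<Sum>y\<in>UNIV. \<nu> y * exp (- s x y / e))"
    by (rule member_le_sum) (simp_all add: less_imp_le[OF nupos])
  hence "\<nu> y * exp (- s x y / e) \<le> 1" using row by simp
  hence "exp (- s x y / e) \<le> 1 / \<nu> y" using nupos[of y] by (simp add: field_simps)
  also have "\<dots> \<le> m" using nu[of y] m nupos[of y] by (simp add: field_simps)
  finally have "- s x y / e \<le> ln m" using m by (simp add: ln_ge_iff[symmetric] del: ln_ge_iff)
  hence "e * (- s x y / e) \<le> e * ln m" using e by (intro mult_left_mono) auto
  thus ?thesis using e by simp
qed

lemma sum2_sub_le: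
  fixes f :: "'x::finite \<Rightarrow> 'y::finite \<Rightarrow> real"
  assumes "\<And>x y. f x y \<ge> 0"
  shows "(\<Sum>x\<in>A. \<Sum>y\<in>B. f x y) \<le> (\<Sum>x\<in>UNIV. \<Sum>y\<in>UNIV. f x y)"
proof -
  have "(\<Sum>x\<in>A. \<Sum>y\<in>B. f x y) \<le> (\<Sum>x\<in>A. \<Sum>y\<in>UNIV. f x y)"
    by (intro sum_mono sum_mono2) (auto intro: assms)
  also have "\<dots> \<le> (\<Sum>x\<in>UNIV. \<Sum>y\<in>UNIV. f x y)"
    by (intro sum_mono2) (auto intro: sum_nonneg assms)
  finally show ?thesis .
qed

lemma prod_sum1:
  fixes \<mu> :: "'x::finite \<Rightarrow> real" and \<nu> :: "'y::finite \<Rightarrow> real"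
  assumes "(\<Sum>x\<in>UNIV. \<mu> x) = 1" "(\<Sum>y\<in>UNIV. \<nu> y) = 1"
  shows "(\<Sum>x\<in>UNIV. \<Sum>y\<in>UNIV. \<mu> x * \<nu> y * E) = E"
  using assms by (simp add: sum_distrib_left[symmetric] sum_distrib_right[symmetric])

lemma cross_small:
  fixes \<mu> :: "'x::finite \<Rightarrow> real" and \<nu> :: "'y::finite \<Rightarrow> real" and sa :: "'x \<Rightarrow> 'y \<Rightarrow> real"
  assumes mu: "\<And>x. \<mu> x \<ge> 0" and nu: "\<And>y. \<nu> y \<ge> 0"
    and ms: "(\<Sum>x\<in>UNIV. \<mu> x) = 1" and ns: "(\<Sum>y\<in>UNIV. \<nu> y) = 1"
    and bd: "\<And>x y. x \<in> A \<Longrightarrow> y \<in> B \<Longrightarrow> - sa x y \<le> L - g"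
    and big: "1 / m \<le> (\<Sum>x\<in>A. \<Sum>y\<in>B. \<mu> x * \<nu> y * exp (- sa x y / e))"
    and m: "m > 0" and e: "e > 0"
  shows "g \<le> L + e * ln m"
proof -
  let ?E = "exp ((L - g) / e)"
  have "(\<Sum>x\<in>A. \<Sum>y\<in>B. \<mu> x * \<nu> y * exp (- sa x y / e)) \<le> (\<Sum>x\<in>A. \<Sum>y\<in>B. \<mu> x * \<nu> y * ?E)"
  proof (intro sum_mono)
    fix x y assume "x \<in> A" "y \<in> B"
    hence "- sa x y / e \<le> (L - g) / e" using bd e divide_right_mono[of "- sa x y" "L - g" e] by simp
    thus "\<mu> x * \<nu> y * exp (- sa x y / e) \<le> \<mu> x * \<nu> y * ?E"
      by (intro mult_left_mono) (auto intro: mult_nonneg_nonneg mu nu)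
  qed
  also have "\<dots> \<le> (\<Sum>x\<in>UNIV. \<Sum>y\<in>UNIV. \<mu> x * \<nu> y * ?E)"
    by (rule sum2_sub_le) (simp add: mu nu)
  also have "\<dots> = ?E" by (rule prod_sum1[OF ms ns])
  finally have "1 / m \<le> ?E" using big by linarith
  hence "ln (1 / m) \<le> ln ?E" using m by (subst ln_le_cancel_iff) auto
  hence "ln (1 / m) \<le> (L - g) / e" by simp
  hence "- ln m \<le> (L - g) / e" using m by (simp add: ln_div)
  hence "- ln m * e \<le> L - g" using e by (simp add: le_divide_eq)
  thus ?thesis by (simp add: algebra_simps)
qed



lemma exp_young: fixes t u :: real assumes "0 \<le> t" "t \<le> 1" shows "exp (t * u) \<le> t * exp u + (1 - t)"
  using convex_onD[OF exp_convex, of t 0 u] assms by (simp add: algebra_simps)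

lemma zero_case:
  fixes \<mu> :: "'x::finite \<Rightarrow> real" and \<nu> :: "'y::finite \<Rightarrow> real" and s1 s2 :: "'x \<Rightarrow> 'y \<Rightarrow> real"
  assumes e: "0 < e2" "e2 < e1" and m: "m > 0" and n: "n \<ge> 1"
    and mu1: "\<And>x. \<mu> x \<ge> 1 / m" and nu1: "\<And>y. \<nu> y \<ge> 1 / m"
    and mule: "\<And>x. \<mu> x \<le> 1" and nule: "\<And>y. \<nu> y \<le> 1"
    and ms: "(\<Sum>x\<in>UNIV. \<mu> x) = 1" and ns: "(\<Sum>y\<in>UNIV. \<nu> y) = 1"
    and cX: "real (card (UNIV::'x set)) \<le> n" and cY: "real (card (UNIV::'y set)) \<le> n"
    and balA: "(\<Sum>x\<in>-Q. \<Sum>y\<in>R. \<mu> x * \<nu> y * exp (- s1 x y / e1)) = (\<Sum>x\<in>Q. \<Sum>y\<in>-R. \<mu> x * \<nu> y * exp (- s1 x y / e1))"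
    and balB: "(\<Sum>x\<in>-Q. \<Sum>y\<in>R. \<mu> x * \<nu> y * exp (- s2 x y / e2)) = (\<Sum>x\<in>Q. \<Sum>y\<in>-R. \<mu> x * \<nu> y * exp (- s2 x y / e2))"
    and cr1: "\<And>x y. x \<notin> Q \<Longrightarrow> y \<in> R \<Longrightarrow> s2 x y \<ge> s1 x y + g"
    and cr2: "\<And>x y. x \<in> Q \<Longrightarrow> y \<notin> R \<Longrightarrow> s1 x y \<ge> s2 x y + g"
    and ne: "xa \<notin> Q" "ya \<in> R"
  shows "g \<le> e1 * (ln m + ln n)"
proof -
  have e1: "e1 > 0" using e by simp
  define \<theta> where "\<theta> = e2 / e1"
  have th: "0 < \<theta>" "\<theta> < 1" using e unfolding \<theta>_def by (auto simp: divide_less_eq)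
  have mupos: "\<mu> x > 0" for x using mu1[of x] m by (meson less_le_trans zero_less_divide_1_iff)
  have nupos: "\<nu> y > 0" for y using nu1[of y] m by (meson less_le_trans zero_less_divide_1_iff)
  define P2 where "P2 x y = \<mu> x * \<nu> y * exp (- s2 x y / e2)" for x y
  have P2pos: "P2 x y > 0" for x y unfolding P2_def using mupos nupos by simp
  define B where "B = (\<Sum>x\<in>-Q. \<Sum>y\<in>R. P2 x y)"
  define A where "A = (\<Sum>x\<in>-Q. \<Sum>y\<in>R. \<mu> x * \<nu> y * exp (- s1 x y / e1))"
  define F1 where "F1 = (\<Sum>x\<in>-Q. \<Sum>y\<in>R. \<mu> x * \<nu> y * exp (- s2 x y / e1))"
  define F2 where "F2 = (\<Sum>x\<in>Q. \<Sum>y\<in>-R. \<mu> x * \<nu> y * exp (- s2 x y / e1))"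
  have Bpos: "B > 0"
  proof -
    have "P2 xa ya \<le> (\<Sum>y\<in>R. P2 xa y)" by (rule member_le_sum) (use ne P2pos in \<open>auto intro: less_imp_le\<close>)
    also have "\<dots> \<le> B" unfolding B_def
      by (rule member_le_sum) (use ne P2pos in \<open>auto intro: less_imp_le sum_nonneg\<close>)
    finally show ?thesis using P2pos[of xa ya] by linarith
  qed
  have a: "F1 \<le> exp (- g / e1) * A"
    unfolding F1_def A_def sum_distrib_left
  proof (intro sum_mono)
    fix x y assume "x \<in> -Q" "y \<in> R"
    hence "- s2 x y \<le> - g + - s1 x y" using cr1[of x y] by simp
    hence "- s2 x y / e1 \<le> - g / e1 + - s1 x y / e1" using e1 divide_right_mono[of "- s2 x y" "- g + - s1 x y" e1]
      by (simp add: add_divide_distrib diff_divide_distrib)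
    hence "exp (- s2 x y / e1) \<le> exp (- g / e1) * exp (- s1 x y / e1)" by (simp add: exp_add[symmetric])
    thus "\<mu> x * \<nu> y * exp (- s2 x y / e1) \<le> exp (- g / e1) * (\<mu> x * \<nu> y * exp (- s1 x y / e1))"
      using mupos[of x] nupos[of y] mult_left_mono[of _ _ "\<mu> x * \<nu> y"] by (simp add: algebra_simps)
  qed
  have b: "A \<le> exp (- g / e1) * F2"
    unfolding F2_def A_def balA sum_distrib_left
  proof (intro sum_mono)
    fix x y assume "x \<in> Q" "y \<in> -R"
    hence "- s1 x y \<le> - g + - s2 x y" using cr2[of x y] by simp
    hence "- s1 x y / e1 \<le> - g / e1 + - s2 x y / e1" using e1 divide_right_mono[of "- s1 x y" "- g + - s2 x y" e1]
      by (simp add: add_divide_distrib diff_divide_distrib)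
    hence "exp (- s1 x y / e1) \<le> exp (- g / e1) * exp (- s2 x y / e1)" by (simp add: exp_add[symmetric])
    thus "\<mu> x * \<nu> y * exp (- s1 x y / e1) \<le> exp (- g / e1) * (\<mu> x * \<nu> y * exp (- s2 x y / e1))"
      using mupos[of x] nupos[of y] mult_left_mono[of _ _ "\<mu> x * \<nu> y"] by (simp add: algebra_simps)
  qed
  have c: "F2 \<le> exp (\<theta> * ln B)"
  proof -
    have pt: "\<mu> x * \<nu> y * exp (- s2 x y / e1) \<le> exp (\<theta> * ln B) * (\<theta> / B * P2 x y + (1 - \<theta>) * (\<mu> x * \<nu> y))" for x y
    proof -
      define u where "u = - s2 x y / e2"
      have "- s2 x y / e1 = \<theta> * u" unfolding u_def \<theta>_def using e by (simp add: field_simps)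
      hence "exp (- s2 x y / e1) = exp (\<theta> * ln B) * exp (\<theta> * (u - ln B))"
        by (simp add: exp_add[symmetric] algebra_simps)
      also have "exp (\<theta> * (u - ln B)) \<le> \<theta> * exp (u - ln B) + (1 - \<theta>)"
        using th by (intro exp_young) auto
      also have "exp (u - ln B) = exp u / B" using Bpos by (simp add: exp_diff)
      finally have "exp (- s2 x y / e1) \<le> exp (\<theta> * ln B) * (\<theta> * (exp u / B) + (1 - \<theta>))"
        by (simp add: mult_left_mono)
      hence "\<mu> x * \<nu> y * exp (- s2 x y / e1) \<le> \<mu> x * \<nu> y * (exp (\<theta> * ln B) * (\<theta> * (exp u / B) + (1 - \<theta>)))"
        using mupos[of x] nupos[of y] by (intro mult_left_mono) auto
      thus ?thesis unfolding P2_def u_def by (simp add: algebra_simps)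
    qed
    have "F2 \<le> (\<Sum>x\<in>Q. \<Sum>y\<in>-R. exp (\<theta> * ln B) * (\<theta> / B * P2 x y + (1 - \<theta>) * (\<mu> x * \<nu> y)))"
      unfolding F2_def by (intro sum_mono pt)
    also have "\<dots> = exp (\<theta> * ln B) * (\<theta> / B * (\<Sum>x\<in>Q. \<Sum>y\<in>-R. P2 x y) + (1 - \<theta>) * (\<Sum>x\<in>Q. \<Sum>y\<in>-R. \<mu> x * \<nu> y))"
      by (simp add: distrib_left sum.distrib sum_distrib_left mult_ac)
    also have "(\<Sum>x\<in>Q. \<Sum>y\<in>-R. P2 x y) = B" unfolding B_def P2_def using balB by simp
    also have "(\<Sum>x\<in>Q. \<Sum>y\<in>-R. \<mu> x * \<nu> y) \<le> (\<Sum>x\<in>UNIV. \<Sum>y\<in>UNIV. \<mu> x * \<nu> y)"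
    proof -
      have "(\<Sum>x\<in>Q. \<Sum>y\<in>-R. \<mu> x * \<nu> y) \<le> (\<Sum>x\<in>Q. \<Sum>y\<in>UNIV. \<mu> x * \<nu> y)"
        by (intro sum_mono sum_mono2) (auto simp: less_imp_le[OF mupos] less_imp_le[OF nupos])
      also have "\<dots> \<le> (\<Sum>x\<in>UNIV. \<Sum>y\<in>UNIV. \<mu> x * \<nu> y)"
        by (intro sum_mono2) (auto intro!: sum_nonneg simp: less_imp_le[OF mupos] less_imp_le[OF nupos])
      finally show ?thesis .
    qed
    also have "(\<Sum>x\<in>UNIV. \<Sum>y\<in>UNIV. \<mu> x * \<nu> y) = 1"
      using ms ns by (simp add: sum_distrib_left[symmetric] sum_distrib_right[symmetric])
    finally show ?thesis using th Bpos
      by (simp add: mult_left_mono)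
  qed
  have d: "exp (\<theta> * ln B - 2 * ln m - 2 * ln n) \<le> F1"
  proof -
    have "\<exists>x\<in>-Q. \<exists>y\<in>R. P2 x y \<ge> B / n^2"
    proof (rule ccontr)
      assume "\<not> ?thesis"
      hence lt: "\<And>x y. x \<in> -Q \<Longrightarrow> y \<in> R \<Longrightarrow> P2 x y < B / n^2" by (auto simp: not_le)
      have cR: "card R > 0" using ne by (auto simp: card_gt_0_iff)
      have cQ: "card (-Q) > 0" using ne by (auto simp: card_gt_0_iff)
      have "real (card R) \<le> n" using cY card_mono[of "UNIV::'y set" R] by (simp add: le_trans)
      moreover have "real (card (-Q)) \<le> n" using cX card_mono[of "UNIV::'x set" "-Q"] by (simp add: le_trans)
      moreover have bb: "(\<Sum>x\<in>-Q. \<Sum>y\<in>R. P2 x y) < real (card (-Q)) * (real (card R) * (B / n^2))"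
      proof (rule sum_bounded_above_strict[OF _ cQ])
        fix x assume "x \<in> -Q"
        thus "(\<Sum>y\<in>R. P2 x y) < of_nat (card R) * (B / n^2)"
          using sum_bounded_above_strict[OF _ cR, of "P2 x" "B / n^2"] lt by auto
      qed
      hence "B < real (card (-Q)) * (real (card R) * (B / n^2))" by (simp only: B_def[symmetric])
      ultimately have "B < n * (n * (B / n^2))"
      proof -
        have nn: "B / n^2 \<ge> 0" using Bpos n by simp
        have "real (card R) * (B / n^2) \<le> n * (B / n^2)" using \<open>real (card R) \<le> n\<close> nn by (rule mult_right_mono)
        note h2 = this
        have c0: "0 \<le> real (card R) * (B / n^2)" using nn by (rule mult_nonneg_nonneg[OF of_nat_0_le_iff])
        have "real (card (-Q)) * (real (card R) * (B / n^2)) \<le> n * (n * (B / n^2))"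
          apply (rule mult_mono)
             apply (rule \<open>real (card (-Q)) \<le> n\<close>)
            apply (rule h2)
          using n apply simp
          apply (rule c0)
          done
        thus ?thesis using \<open>B < real (card (-Q)) * (real (card R) * (B / n^2))\<close> by linarith
      qed
      thus False using n by (simp add: power2_eq_square)
    qed
    then obtain x0 y0 where x0: "x0 \<in> -Q" and y0: "y0 \<in> R" and big: "P2 x0 y0 \<ge> B / n^2" by blast
    define w0 where "w0 = \<mu> x0 * \<nu> y0"
    define u0 where "u0 = - s2 x0 y0 / e2"
    have w0pos: "w0 > 0" unfolding w0_def using mupos nupos by simp
    have w0le: "w0 \<le> 1" unfolding w0_def using mule nule mupos nupos by (simp add: mult_le_one less_imp_le)
    have w0ge: "w0 \<ge> 1 / m^2"
    proof -
      have "(1/m) * (1/m) \<le> \<mu> x0 * \<nu> y0"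
        apply (rule mult_mono)
        using mu1[of x0] nu1[of y0] m mupos[of x0] by auto
      thus ?thesis by (simp add: power2_eq_square w0_def)
    qed
    have lnw1: "ln w0 \<le> 0" using w0pos w0le by simp
    have lnw2: "ln w0 \<ge> - 2 * ln m"
    proof -
      have "ln (1 / m^2) \<le> ln w0" using w0ge m w0pos by (subst ln_le_cancel_iff) auto
      thus ?thesis using m by (simp add: ln_div ln_realpow)
    qed
    have lnn: "ln n \<ge> 0" using n by simp
    have "B \<le> n^2 * (w0 * exp u0)" using big n unfolding P2_def w0_def u0_def by (simp add: field_simps)
    hence "ln B \<le> ln (n^2 * (w0 * exp u0))" using Bpos by (subst ln_le_cancel_iff) auto
    also have "\<dots> = 2 * ln n + ln w0 + u0" using n w0pos by (simp add: ln_mult ln_realpow)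
    finally have lnB: "ln B \<le> 2 * ln n + ln w0 + u0" .
    have "\<theta> * ln B \<le> \<theta> * (2 * ln n + ln w0 + u0)" using th lnB by (intro mult_left_mono) auto
    moreover have "\<theta> * ln n \<le> ln n" using th lnn by (simp add: mult_left_le_one_le)
    moreover have "\<theta> * ln w0 \<le> 0" using th lnw1 by (simp add: mult_nonneg_nonpos)
    ultimately have key: "\<theta> * ln B - 2 * ln m - 2 * ln n \<le> ln w0 + \<theta> * u0"
      using lnw2 by (simp add: algebra_simps)
    have "exp (\<theta> * ln B - 2 * ln m - 2 * ln n) \<le> exp (ln w0 + \<theta> * u0)" using key by simp
    also have "\<dots> = \<mu> x0 * \<nu> y0 * exp (- s2 x0 y0 / e1)"
    proof -
      have "\<theta> * u0 = - s2 x0 y0 / e1" unfolding \<theta>_def u0_def using e by (simp add: field_simps)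
      moreover have "exp (ln w0 + \<theta> * u0) = w0 * exp (\<theta> * u0)" using w0pos by (simp add: exp_add)
      ultimately show ?thesis by (simp add: w0_def)
    qed
    also have "\<dots> \<le> (\<Sum>y\<in>R. \<mu> x0 * \<nu> y * exp (- s2 x0 y / e1))"
      by (rule member_le_sum) (use y0 mupos nupos in \<open>auto intro: less_imp_le\<close>)
    also have "\<dots> \<le> F1" unfolding F1_def
      by (rule member_le_sum) (use x0 in \<open>auto intro!: sum_nonneg simp: less_imp_le[OF mupos] less_imp_le[OF nupos]\<close>)
    finally show ?thesis .
  qed
  have "exp (\<theta> * ln B - 2 * ln m - 2 * ln n) \<le> exp (- g / e1) * (exp (- g / e1) * exp (\<theta> * ln B))"
  proof -
    have "exp (- g / e1) * F2 \<le> exp (- g / e1) * exp (\<theta> * ln B)" using c by (intro mult_left_mono) auto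
    hence "A \<le> exp (- g / e1) * exp (\<theta> * ln B)" using b by linarith
    hence "exp (- g / e1) * A \<le> exp (- g / e1) * (exp (- g / e1) * exp (\<theta> * ln B))"
      by (intro mult_left_mono) auto
    thus ?thesis using a d by linarith
  qed
  also have "\<dots> = exp (- g / e1 + - g / e1 + \<theta> * ln B)" by (simp only: exp_add mult.assoc)
  finally have "\<theta> * ln B - 2 * ln m - 2 * ln n \<le> - g / e1 + - g / e1 + \<theta> * ln B" by simp
  hence "g / e1 \<le> ln m + ln n" by simp
  thus ?thesis using e1 by (simp add: divide_le_eq mult.commute)
qed


lemma gap_full:
  fixes \<mu> :: "'x::finite \<Rightarrow> real" and \<nu> :: "'y::finite \<Rightarrow> real" and s1 s2 :: "'x \<Rightarrow> 'y \<Rightarrow> real"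
    and r :: "'x \<Rightarrow> int" and s :: "'y \<Rightarrow> int" and M N :: nat
  assumes e: "0 < e2" "e2 < e1" and M: "M > 0"
    and cX: "card (UNIV::'x set) \<le> N" and cY: "card (UNIV::'y set) \<le> N"
    and r_pos: "\<And>x. r x > 0" and s_pos: "\<And>y. s y > 0"
    and mu_def: "\<And>x. \<mu> x = real_of_int (r x) / real M"
    and nu_def: "\<And>y. \<nu> y = real_of_int (s y) / real M"
    and ms: "(\<Sum>x\<in>UNIV. \<mu> x) = 1" and ns: "(\<Sum>y\<in>UNIV. \<nu> y) = 1"
    and row1: "\<And>x. (\<Sum>y\<in>UNIV. \<nu> y * exp (- s1 x y / e1)) = 1"
    and col1: "\<And>y. (\<Sum>x\<in>UNIV. \<mu> x * exp (- s1 x y / e1)) = 1"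
    and row2: "\<And>x. (\<Sum>y\<in>UNIV. \<nu> y * exp (- s2 x y / e2)) = 1"
    and col2: "\<And>y. (\<Sum>x\<in>UNIV. \<mu> x * exp (- s2 x y / e2)) = 1"
    and cr1: "\<And>x y. x \<notin> Q \<Longrightarrow> y \<in> R \<Longrightarrow> s2 x y \<ge> s1 x y + g"
    and cr2: "\<And>x y. x \<in> Q \<Longrightarrow> y \<notin> R \<Longrightarrow> s1 x y \<ge> s2 x y + g"
    and ne: "ya \<in> R" "yb \<notin> R"
  shows "g \<le> e1 * (2 * ln (real M) + ln (real N))"
proof -
  define m where "m = real M"
  have m: "m > 0" "m \<ge> 1" using M unfolding m_def by auto
  have e1: "e1 > 0" using e by simp
  have mu1: "\<mu> x \<ge> 1 / m" for x using r_pos[of x] m unfolding mu_def m_def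
    by (simp add: divide_right_mono)
  have nu1: "\<nu> y \<ge> 1 / m" for y using s_pos[of y] m unfolding nu_def m_def
    by (simp add: divide_right_mono)
  have mupos: "\<mu> x > 0" for x using mu1[of x] m by (meson less_le_trans zero_less_divide_1_iff)
  have nupos: "\<nu> y > 0" for y using nu1[of y] m by (meson less_le_trans zero_less_divide_1_iff)
  have mule: "\<mu> x \<le> 1" for x
    using member_le_sum[of x UNIV \<mu>] ms mupos by (simp add: less_imp_le)
  have nule: "\<nu> y \<le> 1" for y
    using member_le_sum[of y UNIV \<nu>] ns nupos by (simp add: less_imp_le)
  have N1: "N \<ge> 1"
  proof -
    have "card (UNIV::'x set) > 0" by (simp add: card_gt_0_iff)
    thus ?thesis using cX by linarith
  qed
  have lnm: "ln m \<ge> 0" using m by simp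
  have lnN: "ln (real N) \<ge> 0" using N1 by simp
  have rowP1: "(\<Sum>y\<in>UNIV. \<mu> x * \<nu> y * exp (- s1 x y / e1)) = \<mu> x" for x
    using row1[of x] by (simp add: sum_distrib_left[symmetric] mult.assoc)
  have colP1: "(\<Sum>x\<in>UNIV. \<mu> x * \<nu> y * exp (- s1 x y / e1)) = \<nu> y" for y
  proof -
    have "(\<Sum>x\<in>UNIV. \<mu> x * \<nu> y * exp (- s1 x y / e1)) = \<nu> y * (\<Sum>x\<in>UNIV. \<mu> x * exp (- s1 x y / e1))"
      by (simp add: sum_distrib_left mult_ac)
    thus ?thesis using col1[of y] by simp
  qed
  have rowP2: "(\<Sum>y\<in>UNIV. \<mu> x * \<nu> y * exp (- s2 x y / e2)) = \<mu> x" for x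
    using row2[of x] by (simp add: sum_distrib_left[symmetric] mult.assoc)
  have colP2: "(\<Sum>x\<in>UNIV. \<mu> x * \<nu> y * exp (- s2 x y / e2)) = \<nu> y" for y
  proof -
    have "(\<Sum>x\<in>UNIV. \<mu> x * \<nu> y * exp (- s2 x y / e2)) = \<nu> y * (\<Sum>x\<in>UNIV. \<mu> x * exp (- s2 x y / e2))"
      by (simp add: sum_distrib_left mult_ac)
    thus ?thesis using col2[of y] by simp
  qed
  define d where "d = (\<Sum>y\<in>R. \<nu> y) - (\<Sum>x\<in>Q. \<mu> x)"
  have bal1: "(\<Sum>x\<in>-Q. \<Sum>y\<in>R. \<mu> x * \<nu> y * exp (- s1 x y / e1)) - (\<Sum>x\<in>Q. \<Sum>y\<in>-R. \<mu> x * \<nu> y * exp (- s1 x y / e1)) = d"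
    unfolding d_def by (rule balance[OF rowP1 colP1])
  have bal2: "(\<Sum>x\<in>-Q. \<Sum>y\<in>R. \<mu> x * \<nu> y * exp (- s2 x y / e2)) - (\<Sum>x\<in>Q. \<Sum>y\<in>-R. \<mu> x * \<nu> y * exp (- s2 x y / e2)) = d"
    unfolding d_def by (rule balance[OF rowP2 colP2])
  define k where "k = (\<Sum>y\<in>R. s y) - (\<Sum>x\<in>Q. r x)"
  have dk: "d = real_of_int k / m"
    unfolding d_def k_def m_def by (simp add: mu_def nu_def sum_divide_distrib[symmetric] diff_divide_distrib)
  have lnm_e: "e2 * ln m \<le> e1 * ln m" using e lnm by (intro mult_right_mono) auto
  have target: "e1 * (ln m + ln m) \<le> e1 * (2 * ln (real M) + ln (real N))"
    using e1 lnN unfolding m_def by (intro mult_left_mono) auto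
  consider "k \<ge> 1" | "k \<le> -1" | "k = 0" by linarith
  then show ?thesis
  proof cases
    case 1
    hence "d \<ge> 1 / m" using dk m by (simp add: divide_right_mono)
    moreover have "(\<Sum>x\<in>Q. \<Sum>y\<in>-R. \<mu> x * \<nu> y * exp (- s2 x y / e2)) \<ge> 0"
      by (intro sum_nonneg) (simp add: less_imp_le[OF mupos] less_imp_le[OF nupos])
    ultimately have big: "1 / m \<le> (\<Sum>x\<in>-Q. \<Sum>y\<in>R. \<mu> x * \<nu> y * exp (- s2 x y / e2))"
      using bal2 by linarith
    have "g \<le> e1 * ln m + e2 * ln m"
    proof (rule cross_small[OF _ _ ms ns _ big m(1) e(1)])
      fix x y assume "x \<in> -Q" "y \<in> R"
      hence "s2 x y \<ge> s1 x y + g" using cr1 by auto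
      moreover have "- s1 x y \<le> e1 * ln m" by (rule slack_lb[OF row1 nu1 m(1) e1])
      ultimately show "- s2 x y \<le> e1 * ln m - g" by linarith
    qed (simp_all add: less_imp_le[OF mupos] less_imp_le[OF nupos])
    thus ?thesis using lnm_e target by (simp add: algebra_simps)
  next
    case 2
    hence "real_of_int k \<le> -1" by simp
    hence "d \<le> - 1 / m" using dk m divide_right_mono[of "real_of_int k" "-1" m] by simp
    moreover have "(\<Sum>x\<in>-Q. \<Sum>y\<in>R. \<mu> x * \<nu> y * exp (- s1 x y / e1)) \<ge> 0"
      by (intro sum_nonneg) (simp add: less_imp_le[OF mupos] less_imp_le[OF nupos])
    ultimately have big: "1 / m \<le> (\<Sum>x\<in>Q. \<Sum>y\<in>-R. \<mu> x * \<nu> y * exp (- s1 x y / e1))"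
      using bal1 by linarith
    have "g \<le> e2 * ln m + e1 * ln m"
    proof (rule cross_small[OF _ _ ms ns _ big m(1) e1])
      fix x y assume "x \<in> Q" "y \<in> -R"
      hence "s1 x y \<ge> s2 x y + g" using cr2 by auto
      moreover have "- s2 x y \<le> e2 * ln m" by (rule slack_lb[OF row2 nu1 m(1) e(1)])
      ultimately show "- s1 x y \<le> e2 * ln m - g" by linarith
    qed (simp_all add: less_imp_le[OF mupos] less_imp_le[OF nupos])
    thus ?thesis using lnm_e target by (simp add: algebra_simps)
  next
    case 3
    hence d0: "d = 0" using dk by simp
    obtain xa where xa: "xa \<notin> Q"
    proof (cases "Q = UNIV")
      case True
      have "(\<Sum>y\<in>R. \<nu> y) + (\<Sum>y\<in>-R. \<nu> y) = 1" using ns split_UNIV[of \<nu> R] by simp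
      moreover have "\<nu> yb \<le> (\<Sum>y\<in>-R. \<nu> y)"
        by (rule member_le_sum) (use ne in \<open>auto simp: less_imp_le[OF nupos]\<close>)
      ultimately have "(\<Sum>y\<in>R. \<nu> y) < 1" using nupos[of yb] by linarith
      hence "d < 0" unfolding d_def using True ms by simp
      thus ?thesis using d0 by simp
    next
      case False then show ?thesis using that by auto
    qed
    have "g \<le> e1 * (ln m + ln (real N))"
      by (rule zero_case[OF e m(1) _ mu1 nu1 mule nule ms ns _ _ _ _ cr1 cr2 xa ne(1)])
         (use bal1 bal2 d0 cX cY N1 in auto)
    thus ?thesis using e1 lnm unfolding m_def by (smt (verit) mult_left_mono)
  qed
qed

lemma pigeon:
  fixes S :: "real set"
  assumes fin: "finite S" and h: "h \<ge> 0"
    and gap: "\<And>t g. a \<le> t \<Longrightarrow> t + g \<le> b \<Longrightarrow> g > h \<Longrightarrow> \<exists>s\<in>S. t < s \<and> s < t + g"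
  shows "b - a \<le> (real (card S) + 1) * h"
proof (rule ccontr)
  assume "\<not> ?thesis"
  hence big: "b - a > (real (card S) + 1) * h" by simp
  define n where "n = card S"
  define w where "w = (b - a) / (real n + 1)"
  have wh: "w > h" unfolding w_def n_def using big by (simp add: pos_less_divide_eq mult.commute)
  have wpos: "w > 0" using wh h by simp
  have "\<forall>k\<in>{..n}. \<exists>s\<in>S. a + real k * w < s \<and> s < a + real k * w + w"
  proof
    fix k assume k: "k \<in> {..n}"
    have "real k * w \<le> real n * w" using k wpos by (intro mult_right_mono) auto
    moreover have "(real n + 1) * w = b - a" unfolding w_def by simp
    ultimately have "a + real k * w + w \<le> b" by (simp add: algebra_simps)
    moreover have "a \<le> a + real k * w" using wpos by simp
    ultimately show "\<exists>s\<in>S. a + real k * w < s \<and> s < a + real k * w + w" using gap wh by blast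
  qed
  then obtain f where f: "\<And>k. k \<in> {..n} \<Longrightarrow> f k \<in> S \<and> a + real k * w < f k \<and> f k < a + real k * w + w"
    by metis
  have mono: "f k < f k'" if "k < k'" "k \<in> {..n}" "k' \<in> {..n}" for k k'
  proof -
    have "real k + 1 \<le> real k'" using that by simp
    hence "real k * w + w \<le> real k' * w" using wpos by (metis distrib_right mult_1 mult_right_mono less_imp_le)
    thus ?thesis using f[OF that(2)] f[OF that(3)] by linarith
  qed
  have "inj_on f {..n}"
  proof (rule inj_onI)
    fix k k' assume "k \<in> {..n}" "k' \<in> {..n}" "f k = f k'"
    thus "k = k'" using mono[of k k'] mono[of k' k] by (metis linorder_neqE_nat less_irrefl)
  qed
  moreover have "f ` {..n} \<subseteq> S" using f by auto
  ultimately have "card {..n} \<le> card S" using fin by (rule card_inj_on_le)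
  thus False unfolding n_def by simp
qed




lemma Kprod:
  "Kern e c \<mu> \<nu> x y * exp ((b + k) / e) * exp ((a - k) / e) = \<mu> x * \<nu> y * exp ((a + b - c x y) / e)"
proof -
  have "exp (- c x y / e) * exp ((b + k) / e) * exp ((a - k) / e) = exp ((- c x y + (b + k) + (a - k)) / e)"
    by (simp only: exp_add[symmetric] add_divide_distrib)
  also have "- c x y + (b + k) + (a - k) = a + b - c x y" by simp
  finally show ?thesis unfolding Kern_def by (simp add: mult_ac)
qed

lemma Jfun_alt:
  "Jfun eps c \<mu> \<nu> \<alpha> \<beta> = (\<Sum>x\<in>UNIV. \<alpha> x * \<mu> x) + (\<Sum>y\<in>UNIV. \<beta> y * \<nu> y)
     - eps * ((\<Sum>x\<in>UNIV. \<Sum>y\<in>UNIV. \<mu> x * (\<nu> y * exp ((\<alpha> x + \<beta> y - c x y) / eps)))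
              - (\<Sum>x\<in>UNIV. \<Sum>y\<in>UNIV. Kern eps c \<mu> \<nu> x y))"
  unfolding Jfun_def by (simp add: right_diff_distrib sum_subtractf Kern_exp)

lemma bound_alg:
  fixes L K p n :: real
  assumes "L \<ge> 0" "K \<ge> 0" "n \<ge> 1" "p > 0"
  shows "p * ((2 * n + 1) * (2 * L + K)) + (p - 1) * L \<le> p * (n * (4 * K + 24 * L) + L)"
proof -
  have a: "L \<le> n * L" using assms by (simp add: mult_le_cancel_right1)
  have b: "K \<le> n * K" using assms by (simp add: mult_le_cancel_right1)
  have "(2 * n + 1) * (2 * L + K) = 4 * (n * L) + 2 * (n * K) + 2 * L + K" by (simp add: algebra_simps)
  moreover have "n * (4 * K + 24 * L) = 4 * (n * K) + 24 * (n * L)" by (simp add: algebra_simps)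
  moreover have "0 \<le> n * L" "0 \<le> n * K" using assms by auto
  ultimately have "(2 * n + 1) * (2 * L + K) \<le> n * (4 * K + 24 * L)" using a b by linarith
  hence "p * ((2 * n + 1) * (2 * L + K)) \<le> p * (n * (4 * K + 24 * L))" using assms by (intro mult_left_mono) auto
  moreover have "(p - 1) * L \<le> p * L" using assms by (simp add: algebra_simps)
  ultimately show ?thesis by (simp add: algebra_simps)
qed

theorem mainTheorem10:
  fixes c :: "'x::finite \<Rightarrow> 'y::finite \<Rightarrow> real"
    and N M :: nat
    and r :: "'x \<Rightarrow> int" and s :: "'y \<Rightarrow> int"
    and \<mu> :: "'x \<Rightarrow> real" and \<nu> :: "'y \<Rightarrow> real"
    and \<epsilon>1 \<epsilon>2 qt :: real
    and \<alpha>1 \<alpha>2 :: "'x \<Rightarrow> real" and \<beta>1 \<beta>2 :: "'y \<Rightarrow> real"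
  assumes cardX: "card (UNIV :: 'x set) \<le> N" and cardY: "card (UNIV :: 'y set) \<le> N"
    and c_nonneg: "\<And>x y. c x y \<ge> 0"
    and M_pos: "M > 0"
    and r_pos: "\<And>x. r x > 0" and s_pos: "\<And>y. s y > 0"
    and r_sum: "(\<Sum>x\<in>UNIV. r x) = int M" and s_sum: "(\<Sum>y\<in>UNIV. s y) = int M"
    and mu_def: "\<And>x. \<mu> x = real_of_int (r x) / real M"
    and nu_def: "\<And>y. \<nu> y = real_of_int (s y) / real M"
    and eps: "\<epsilon>1 > \<epsilon>2" "\<epsilon>2 > 0"
    and max1: "\<And>\<alpha> \<beta>. Jfun \<epsilon>1 c \<mu> \<nu> \<alpha> \<beta> \<le> Jfun \<epsilon>1 c \<mu> \<nu> \<alpha>1 \<beta>1"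
    and max2: "\<And>\<alpha> \<beta>. Jfun \<epsilon>2 c \<mu> \<nu> \<alpha> \<beta> \<le> Jfun \<epsilon>2 c \<mu> \<nu> \<alpha>2 \<beta>2"
    and qt: "0 < qt" "qt < 1"
  shows "\<exists>n::nat. 1 \<le> n \<and>
     real n \<le> 2 + (\<epsilon>1 / \<epsilon>2) * ((real N * (4 * ln (real N) + 24 * ln (real M)) + ln (real M)) / (1 - qt)) \<and>
     sk_q (Kern \<epsilon>2 c \<mu> \<nu>) \<mu> \<nu> (\<lambda>y. exp (\<beta>1 y / \<epsilon>2)) n \<ge> qt"
proof -
  define m where "m = real M"
  have m: "m > 0" "m \<ge> 1" using M_pos unfolding m_def by auto
  have e1: "\<epsilon>1 > 0" using eps by simp
  have mupos: "\<mu> x > 0" for x using r_pos[of x] M_pos mu_def[of x] by simp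
  have nupos: "\<nu> y > 0" for y using s_pos[of y] M_pos nu_def[of y] by simp
  have nu1: "\<nu> y \<ge> 1 / m" for y using s_pos[of y] m unfolding nu_def m_def
    by (simp add: divide_right_mono)
  have ms: "(\<Sum>x\<in>UNIV. \<mu> x) = 1"
  proof -
    have "(\<Sum>x\<in>UNIV. \<mu> x) = (\<Sum>x\<in>UNIV. real_of_int (r x)) / real M"
      by (simp add: mu_def sum_divide_distrib)
    also have "(\<Sum>x\<in>UNIV. real_of_int (r x)) = real M" using r_sum
      by (metis of_int_of_nat_eq of_int_sum)
    finally show ?thesis using M_pos by simp
  qed
  have ns: "(\<Sum>y\<in>UNIV. \<nu> y) = 1"
  proof -
    have "(\<Sum>y\<in>UNIV. \<nu> y) = (\<Sum>y\<in>UNIV. real_of_int (s y)) / real M"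
      by (simp add: nu_def sum_divide_distrib)
    also have "(\<Sum>y\<in>UNIV. real_of_int (s y)) = real M" using s_sum
      by (metis of_int_of_nat_eq of_int_sum)
    finally show ?thesis using M_pos by simp
  qed
  have N1: "N \<ge> 1"
  proof -
    have "card (UNIV::'x set) > 0" by (simp add: card_gt_0_iff)
    thus ?thesis using cardX by linarith
  qed
  have lnm: "ln m \<ge> 0" using m by simp
  have lnN: "ln (real N) \<ge> 0" using N1 by simp
  have R1: "\<And>x. (\<Sum>y\<in>UNIV. \<nu> y * exp ((\<alpha>1 x + \<beta>1 y - c x y) / \<epsilon>1)) = 1"
    by (rule opt_row[OF e1 mupos nupos max1])
  have C1: "\<And>y. (\<Sum>x\<in>UNIV. \<mu> x * exp ((\<alpha>1 x + \<beta>1 y - c x y) / \<epsilon>1)) = 1"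
    by (rule opt_col[OF e1 mupos nupos max1])
  have R2: "\<And>x. (\<Sum>y\<in>UNIV. \<nu> y * exp ((\<alpha>2 x + \<beta>2 y - c x y) / \<epsilon>2)) = 1"
    by (rule opt_row[OF eps(2) mupos nupos max2])
  have C2: "\<And>y. (\<Sum>x\<in>UNIV. \<mu> x * exp ((\<alpha>2 x + \<beta>2 y - c x y) / \<epsilon>2)) = 1"
    by (rule opt_col[OF eps(2) mupos nupos max2])
  define s1 where "s1 x y = - (\<alpha>1 x + \<beta>1 y - c x y)" for x y
  define s2 where "s2 x y = - (\<alpha>2 x + \<beta>2 y - c x y)" for x y
  have row1: "\<And>x. (\<Sum>y\<in>UNIV. \<nu> y * exp (- s1 x y / \<epsilon>1)) = 1" using R1 by (simp add: s1_def)
  have col1: "\<And>y. (\<Sum>x\<in>UNIV. \<mu> x * exp (- s1 x y / \<epsilon>1)) = 1" using C1 by (simp add: s1_def)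
  have row2: "\<And>x. (\<Sum>y\<in>UNIV. \<nu> y * exp (- s2 x y / \<epsilon>2)) = 1" using R2 by (simp add: s2_def)
  have col2: "\<And>y. (\<Sum>x\<in>UNIV. \<mu> x * exp (- s2 x y / \<epsilon>2)) = 1" using C2 by (simp add: s2_def)
  define D where "D y = \<beta>1 y - \<beta>2 y" for y
  define G where "G x = \<alpha>1 x - \<alpha>2 x" for x
  have sdiff: "s2 x y - s1 x y = G x + D y" for x y
    unfolding s1_def s2_def G_def D_def by (simp add: algebra_simps)
  have fD: "finite (range D)" by simp
  have neD: "range D \<noteq> {}" by simp
  obtain ylo where ylo: "D ylo = Min (range D)" using Min_in[OF fD neD] by (metis imageE)
  obtain yhi where yhi: "D yhi = Max (range D)" using Max_in[OF fD neD] by (metis imageE)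
  have Dlo: "D ylo \<le> D y" for y unfolding ylo by (rule Min_le) auto
  have Dhi: "D y \<le> D yhi" for y unfolding yhi by (rule Max_ge) auto
  define h where "h = \<epsilon>1 * (2 * ln (real M) + ln (real N))"
  have h0: "h \<ge> 0" unfolding h_def using e1 lnm lnN unfolding m_def by simp
  define SS where "SS = range D \<union> range (\<lambda>x. - G x)"
  have finSS: "finite SS" unfolding SS_def by simp
  have cardSS: "card SS \<le> 2 * N"
  proof -
    have "card SS \<le> card (range D) + card (range (\<lambda>x. - G x))" unfolding SS_def by (rule card_Un_le)
    also have "card (range D) \<le> card (UNIV::'y set)" by (rule card_image_le) simp
    also have "card (range (\<lambda>x. - G x)) \<le> card (UNIV::'x set)" by (rule card_image_le) simp
    finally show ?thesis using cardX cardY by linarith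
  qed
  have gapH: "\<exists>s\<in>SS. t < s \<and> s < t + g" if tg: "D ylo \<le> t" "t + g \<le> D yhi" "g > h" for t g
  proof (rule ccontr)
    assume no: "\<not> (\<exists>s\<in>SS. t < s \<and> s < t + g)"
    define R where "R = {y. D y \<ge> t + g}"
    define Q where "Q = {x. - G x \<ge> t + g}"
    have Rlow: "D y \<le> t" if "y \<notin> R" for y
    proof -
      have "D y \<in> SS" unfolding SS_def by auto
      thus ?thesis using no that unfolding R_def by force
    qed
    have Qlow: "- G x \<le> t" if "x \<notin> Q" for x
    proof -
      have "- G x \<in> SS" unfolding SS_def by auto
      thus ?thesis using no that unfolding Q_def by force
    qed
    have "g \<le> h" unfolding h_def
    proof (rule gap_full[OF eps(2) eps(1) M_pos cardX cardY r_pos s_pos mu_def nu_def ms ns row1 col1 row2 col2])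
      fix x y assume "x \<notin> Q" "y \<in> R"
      thus "s1 x y + g \<le> s2 x y" using Qlow[of x] sdiff[of x y] unfolding R_def by simp
    next
      fix x y assume "x \<in> Q" "y \<notin> R"
      thus "s2 x y + g \<le> s1 x y" using Rlow[of y] sdiff[of x y] unfolding Q_def by simp
    next
      show "yhi \<in> R" unfolding R_def using tg by simp
    next
      show "ylo \<notin> R" unfolding R_def using tg h0 by simp
    qed
    thus False using tg by simp
  qed
  have osc: "D yhi - D ylo \<le> (real (card SS) + 1) * h"
    by (rule pigeon[OF finSS h0 gapH])
  have osc2: "D yhi - D ylo \<le> (2 * real N + 1) * h"
  proof -
    have "real (card SS) + 1 \<le> 2 * real N + 1" using cardSS by simp
    hence "(real (card SS) + 1) * h \<le> (2 * real N + 1) * h" using h0 by (rule mult_right_mono)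
    thus ?thesis using osc by linarith
  qed
  have valcmp: "(\<Sum>x\<in>UNIV. \<alpha>2 x * \<mu> x) + (\<Sum>y\<in>UNIV. \<beta>2 y * \<nu> y) \<le> (\<Sum>x\<in>UNIV. \<alpha>1 x * \<mu> x) + (\<Sum>y\<in>UNIV. \<beta>1 y * \<nu> y)"
  proof -
    define \<theta> where "\<theta> = \<epsilon>2 / \<epsilon>1"
    have th: "0 < \<theta>" "\<theta> < 1" using eps unfolding \<theta>_def by (auto simp: divide_less_eq)
    have X1: "(\<Sum>x\<in>UNIV. \<Sum>y\<in>UNIV. \<mu> x * (\<nu> y * exp ((\<alpha>1 x + \<beta>1 y - c x y) / \<epsilon>1))) = 1"
      using R1 ms by (simp add: sum_distrib_left[symmetric])
    have X2: "(\<Sum>x\<in>UNIV. \<Sum>y\<in>UNIV. \<mu> x * (\<nu> y * exp ((\<alpha>2 x + \<beta>2 y - c x y) / \<epsilon>1))) \<le> 1"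
    proof -
      have pt: "\<mu> x * (\<nu> y * exp ((\<alpha>2 x + \<beta>2 y - c x y) / \<epsilon>1))
          \<le> \<theta> * (\<mu> x * (\<nu> y * exp ((\<alpha>2 x + \<beta>2 y - c x y) / \<epsilon>2))) + (1 - \<theta>) * (\<mu> x * \<nu> y)" for x y
      proof -
        have "(\<alpha>2 x + \<beta>2 y - c x y) / \<epsilon>1 = \<theta> * ((\<alpha>2 x + \<beta>2 y - c x y) / \<epsilon>2)"
          unfolding \<theta>_def using eps by (simp add: field_simps)
        hence "exp ((\<alpha>2 x + \<beta>2 y - c x y) / \<epsilon>1) \<le> \<theta> * exp ((\<alpha>2 x + \<beta>2 y - c x y) / \<epsilon>2) + (1 - \<theta>)"
          using exp_young[of \<theta> "(\<alpha>2 x + \<beta>2 y - c x y) / \<epsilon>2"] th by simp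
        hence "\<mu> x * \<nu> y * exp ((\<alpha>2 x + \<beta>2 y - c x y) / \<epsilon>1) \<le> \<mu> x * \<nu> y * (\<theta> * exp ((\<alpha>2 x + \<beta>2 y - c x y) / \<epsilon>2) + (1 - \<theta>))"
          using mupos[of x] nupos[of y] by (intro mult_left_mono) auto
        thus ?thesis by (simp add: algebra_simps)
      qed
      have "(\<Sum>x\<in>UNIV. \<Sum>y\<in>UNIV. \<mu> x * (\<nu> y * exp ((\<alpha>2 x + \<beta>2 y - c x y) / \<epsilon>1)))
          \<le> (\<Sum>x\<in>UNIV. \<Sum>y\<in>UNIV. \<theta> * (\<mu> x * (\<nu> y * exp ((\<alpha>2 x + \<beta>2 y - c x y) / \<epsilon>2))) + (1 - \<theta>) * (\<mu> x * \<nu> y))"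
        by (intro sum_mono pt)
      also have "\<dots> = \<theta> * (\<Sum>x\<in>UNIV. \<Sum>y\<in>UNIV. \<mu> x * (\<nu> y * exp ((\<alpha>2 x + \<beta>2 y - c x y) / \<epsilon>2)))
           + (1 - \<theta>) * (\<Sum>x\<in>UNIV. \<Sum>y\<in>UNIV. \<mu> x * \<nu> y)"
        by (simp add: sum.distrib sum_distrib_left)
      also have "(\<Sum>x\<in>UNIV. \<Sum>y\<in>UNIV. \<mu> x * (\<nu> y * exp ((\<alpha>2 x + \<beta>2 y - c x y) / \<epsilon>2))) = 1"
        using R2 ms by (simp add: sum_distrib_left[symmetric])
      also have "(\<Sum>x\<in>UNIV. \<Sum>y\<in>UNIV. \<mu> x * \<nu> y) = 1"
        using ms ns by (simp add: sum_distrib_left[symmetric] sum_distrib_right[symmetric])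
      also have "\<theta> * 1 + (1 - \<theta>) * 1 = (1::real)" by simp
      finally show ?thesis .
    qed
    have "Jfun \<epsilon>1 c \<mu> \<nu> \<alpha>2 \<beta>2 \<le> Jfun \<epsilon>1 c \<mu> \<nu> \<alpha>1 \<beta>1" by (rule max1)
    hence "(\<Sum>x\<in>UNIV. \<alpha>2 x * \<mu> x) + (\<Sum>y\<in>UNIV. \<beta>2 y * \<nu> y) - \<epsilon>1 * ((\<Sum>x\<in>UNIV. \<Sum>y\<in>UNIV. \<mu> x * (\<nu> y * exp ((\<alpha>2 x + \<beta>2 y - c x y) / \<epsilon>1))) - (\<Sum>x\<in>UNIV. \<Sum>y\<in>UNIV. Kern \<epsilon>1 c \<mu> \<nu> x y))
        \<le> (\<Sum>x\<in>UNIV. \<alpha>1 x * \<mu> x) + (\<Sum>y\<in>UNIV. \<beta>1 y * \<nu> y) - \<epsilon>1 * (1 - (\<Sum>x\<in>UNIV. \<Sum>y\<in>UNIV. Kern \<epsilon>1 c \<mu> \<nu> x y))"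
      unfolding Jfun_alt X1 .
    moreover have "\<epsilon>1 * (\<Sum>x\<in>UNIV. \<Sum>y\<in>UNIV. \<mu> x * (\<nu> y * exp ((\<alpha>2 x + \<beta>2 y - c x y) / \<epsilon>1))) \<le> \<epsilon>1 * 1"
      using X2 e1 by (intro mult_left_mono) auto
    ultimately show ?thesis by (simp add: algebra_simps)
  qed
  define \<kappa> where "\<kappa> = D ylo"
  define K where "K = Kern \<epsilon>2 c \<mu> \<nu>"
  define w where "w y = exp ((\<beta>2 y + \<kappa>) / \<epsilon>2)" for y
  define us where "us x = exp ((\<alpha>2 x - \<kappa>) / \<epsilon>2)" for x
  define v0 where "v0 = (\<lambda>y. exp (\<beta>1 y / \<epsilon>2))"
  have Kpos: "K x y > 0" for x y unfolding K_def Kern_def using mupos nupos by simp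
  have Kwu: "K x y * w y * us x = \<mu> x * \<nu> y * exp ((\<alpha>2 x + \<beta>2 y - c x y) / \<epsilon>2)" for x y
    unfolding K_def w_def us_def by (rule Kprod)
  interpret sk: sk_setting K \<mu> \<nu> w us
  proof
    show "\<And>x y. K x y > 0" by (rule Kpos)
    show "\<And>x. \<mu> x > 0" by (rule mupos)
    show "\<And>y. \<nu> y > 0" by (rule nupos)
    show "(\<Sum>x\<in>UNIV. \<mu> x) = 1" by (rule ms)
    show "\<And>y. w y > 0" unfolding w_def by simp
    show "\<And>x. us x > 0" unfolding us_def by simp
    show "us x * (\<Sum>y\<in>UNIV. K x y * w y) = \<mu> x" for x
    proof -
      have "us x * (\<Sum>y\<in>UNIV. K x y * w y) = (\<Sum>y\<in>UNIV. \<mu> x * (\<nu> y * exp ((\<alpha>2 x + \<beta>2 y - c x y) / \<epsilon>2)))"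
        unfolding sum_distrib_left
      proof (rule sum.cong[OF refl])
        fix y show "us x * (K x y * w y) = \<mu> x * (\<nu> y * exp ((\<alpha>2 x + \<beta>2 y - c x y) / \<epsilon>2))"
          using Kwu[of x y] by (simp add: mult_ac)
      qed
      also have "\<dots> = \<mu> x" using R2[of x] by (simp add: sum_distrib_left[symmetric])
      finally show ?thesis .
    qed
    show "w y * (\<Sum>x\<in>UNIV. K x y * us x) = \<nu> y" for y
    proof -
      have "w y * (\<Sum>x\<in>UNIV. K x y * us x) = (\<Sum>x\<in>UNIV. \<nu> y * (\<mu> x * exp ((\<alpha>2 x + \<beta>2 y - c x y) / \<epsilon>2)))"
        unfolding sum_distrib_left
      proof (rule sum.cong[OF refl])
        fix x show "w y * (K x y * us x) = \<nu> y * (\<mu> x * exp ((\<alpha>2 x + \<beta>2 y - c x y) / \<epsilon>2))"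
          using Kwu[of x y] by (simp add: mult_ac)
      qed
      also have "\<dots> = \<nu> y" using C2[of y] by (simp add: sum_distrib_left[symmetric])
      finally show ?thesis .
    qed
  qed
  have v0ge: "v0 y \<ge> w y" for y
  proof -
    have "\<beta>2 y + \<kappa> \<le> \<beta>1 y" using Dlo[of y] unfolding \<kappa>_def D_def by simp
    hence "(\<beta>2 y + \<kappa>) / \<epsilon>2 \<le> \<beta>1 y / \<epsilon>2" using eps by (simp add: divide_right_mono)
    thus ?thesis unfolding v0_def w_def by simp
  qed
  define p where "p = \<epsilon>1 / \<epsilon>2"
  have p1: "p > 1" unfolding p_def using eps by simp
  have Kv0: "(\<Sum>y\<in>UNIV. K x y * v0 y) \<le> \<mu> x * exp (- \<alpha>1 x / \<epsilon>2 + (p - 1) * ln m)" for x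
  proof -
    have pt: "K x y * v0 y \<le> \<mu> x * exp (- \<alpha>1 x / \<epsilon>2) * (exp ((p - 1) * ln m) * (\<nu> y * exp ((\<alpha>1 x + \<beta>1 y - c x y) / \<epsilon>1)))" for y
    proof -
      define a where "a = \<alpha>1 x + \<beta>1 y - c x y"
      have "- s1 x y \<le> \<epsilon>1 * ln m" by (rule slack_lb[OF row1 nu1 m(1) e1])
      hence aub: "a \<le> \<epsilon>1 * ln m" unfolding a_def s1_def by simp
      have "a / \<epsilon>2 = a / \<epsilon>1 + a * (1 / \<epsilon>2 - 1 / \<epsilon>1)" using eps by (simp add: field_simps)
      also have "a * (1 / \<epsilon>2 - 1 / \<epsilon>1) \<le> \<epsilon>1 * ln m * (1 / \<epsilon>2 - 1 / \<epsilon>1)"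
        using aub eps by (intro mult_right_mono) (auto simp: field_simps)
      also have "\<epsilon>1 * ln m * (1 / \<epsilon>2 - 1 / \<epsilon>1) = (p - 1) * ln m" unfolding p_def using eps by (simp add: field_simps)
      finally have ae: "exp (a / \<epsilon>2) \<le> exp ((p - 1) * ln m) * exp (a / \<epsilon>1)" by (simp add: exp_add[symmetric])
      have "K x y * v0 y * exp (\<alpha>1 x / \<epsilon>2) = \<mu> x * \<nu> y * exp (a / \<epsilon>2)"
        unfolding K_def v0_def a_def using Kprod[of \<epsilon>2 c \<mu> \<nu> x y "\<beta>1 y" 0 "\<alpha>1 x"] by simp
      hence "K x y * v0 y = \<mu> x * exp (- \<alpha>1 x / \<epsilon>2) * (\<nu> y * exp (a / \<epsilon>2))"
        by (simp add: exp_minus field_simps)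
      also have "\<dots> \<le> \<mu> x * exp (- \<alpha>1 x / \<epsilon>2) * (\<nu> y * (exp ((p - 1) * ln m) * exp (a / \<epsilon>1)))"
        using ae mupos[of x] nupos[of y] by (intro mult_left_mono) auto
      finally show ?thesis unfolding a_def by (simp add: mult_ac)
    qed
    have "(\<Sum>y\<in>UNIV. K x y * v0 y) \<le> (\<Sum>y\<in>UNIV. \<mu> x * exp (- \<alpha>1 x / \<epsilon>2) * (exp ((p - 1) * ln m) * (\<nu> y * exp ((\<alpha>1 x + \<beta>1 y - c x y) / \<epsilon>1))))"
      by (intro sum_mono pt)
    also have "\<dots> = \<mu> x * exp (- \<alpha>1 x / \<epsilon>2) * exp ((p - 1) * ln m)"
      using R1[of x] by (simp add: sum_distrib_left[symmetric])
    also have "\<dots> = \<mu> x * exp (- \<alpha>1 x / \<epsilon>2 + (p - 1) * ln m)" by (simp only: exp_add mult.assoc)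
    finally show ?thesis .
  qed
  have Kw: "(\<Sum>y\<in>UNIV. K x y * w y) = \<mu> x * exp ((\<kappa> - \<alpha>2 x) / \<epsilon>2)" for x
  proof -
    have "(\<Sum>y\<in>UNIV. K x y * w y) = \<mu> x / us x" using sk.hw[of x] sk.uspos[of x] by (simp add: field_simps)
    also have "\<dots> = \<mu> x * exp ((\<kappa> - \<alpha>2 x) / \<epsilon>2)"
    proof -
      have z: "(\<kappa> - \<alpha>2 x) / \<epsilon>2 + (\<alpha>2 x - \<kappa>) / \<epsilon>2 = 0"
        by (simp only: add_divide_distrib[symmetric]) simp
      have "exp ((\<kappa> - \<alpha>2 x) / \<epsilon>2) * us x = 1" unfolding us_def
        by (simp only: exp_add[symmetric] z exp_zero)
      thus ?thesis using sk.uspos[of x] by (simp add: field_simps)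
    qed
    finally show ?thesis .
  qed
  have Phigap: "Phi K \<mu> v0 - Phi K \<mu> w \<le> ((\<Sum>x\<in>UNIV. (\<alpha>2 x - \<alpha>1 x) * \<mu> x) - \<kappa>) / \<epsilon>2 + (p - 1) * ln m"
  proof -
    have pt: "\<mu> x * ln (\<Sum>y\<in>UNIV. K x y * v0 y) - \<mu> x * ln (\<Sum>y\<in>UNIV. K x y * w y)
        \<le> \<mu> x * ((\<alpha>2 x - \<alpha>1 x - \<kappa>) / \<epsilon>2 + (p - 1) * ln m)" for x
    proof -
      have pos0: "(\<Sum>y\<in>UNIV. K x y * v0 y) > 0" by (rule sk.Kv_pos[OF v0ge])
      have "ln (\<Sum>y\<in>UNIV. K x y * v0 y) \<le> ln (\<mu> x * exp (- \<alpha>1 x / \<epsilon>2 + (p - 1) * ln m))"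
        using Kv0[of x] pos0 mupos[of x] by (subst ln_le_cancel_iff) auto
      also have "\<dots> = ln (\<mu> x) + (- \<alpha>1 x / \<epsilon>2 + (p - 1) * ln m)" using mupos[of x] by (simp add: ln_mult)
      finally have l1: "ln (\<Sum>y\<in>UNIV. K x y * v0 y) \<le> ln (\<mu> x) + (- \<alpha>1 x / \<epsilon>2 + (p - 1) * ln m)" .
      have l2: "ln (\<Sum>y\<in>UNIV. K x y * w y) = ln (\<mu> x) + (\<kappa> - \<alpha>2 x) / \<epsilon>2"
        unfolding Kw using mupos[of x] by (simp add: ln_mult)
      have "ln (\<Sum>y\<in>UNIV. K x y * v0 y) - ln (\<Sum>y\<in>UNIV. K x y * w y) \<le> (\<alpha>2 x - \<alpha>1 x - \<kappa>) / \<epsilon>2 + (p - 1) * ln m"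
        using l1 l2 by (simp add: diff_divide_distrib add_divide_distrib)
      hence "\<mu> x * (ln (\<Sum>y\<in>UNIV. K x y * v0 y) - ln (\<Sum>y\<in>UNIV. K x y * w y)) \<le> \<mu> x * ((\<alpha>2 x - \<alpha>1 x - \<kappa>) / \<epsilon>2 + (p - 1) * ln m)"
        using mupos[of x] by (intro mult_left_mono) auto
      thus ?thesis by (simp add: right_diff_distrib)
    qed
    have "Phi K \<mu> v0 - Phi K \<mu> w \<le> (\<Sum>x\<in>UNIV. \<mu> x * ((\<alpha>2 x - \<alpha>1 x - \<kappa>) / \<epsilon>2 + (p - 1) * ln m))"
      unfolding Phi_def sum_subtractf[symmetric] by (intro sum_mono pt)
    also have "\<dots> = ((\<Sum>x\<in>UNIV. (\<alpha>2 x - \<alpha>1 x) * \<mu> x) - \<kappa>) / \<epsilon>2 + (p - 1) * ln m"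
    proof -
      have pe: "\<mu> x * ((\<alpha>2 x - \<alpha>1 x - \<kappa>) / \<epsilon>2 + (p - 1) * ln m)
          = ((\<alpha>2 x - \<alpha>1 x) * \<mu> x) / \<epsilon>2 + \<mu> x * ((p - 1) * ln m - \<kappa> / \<epsilon>2)" for x
        using eps by (simp add: field_simps)
      have "(\<Sum>x\<in>UNIV. \<mu> x * ((\<alpha>2 x - \<alpha>1 x - \<kappa>) / \<epsilon>2 + (p - 1) * ln m))
          = (\<Sum>x\<in>UNIV. ((\<alpha>2 x - \<alpha>1 x) * \<mu> x) / \<epsilon>2) + (\<Sum>x\<in>UNIV. \<mu> x * ((p - 1) * ln m - \<kappa> / \<epsilon>2))"
        unfolding pe by (rule sum.distrib)
      also have "\<dots> = (\<Sum>x\<in>UNIV. (\<alpha>2 x - \<alpha>1 x) * \<mu> x) / \<epsilon>2 + (\<Sum>x\<in>UNIV. \<mu> x) * ((p - 1) * ln m - \<kappa> / \<epsilon>2)"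
        by (simp only: sum_divide_distrib[symmetric] sum_distrib_right[symmetric])
      finally show ?thesis using ms by (simp add: diff_divide_distrib)
    qed
    finally show ?thesis .
  qed
  have sumD: "(\<Sum>y\<in>UNIV. D y * \<nu> y) \<le> D yhi"
  proof -
    have "(\<Sum>y\<in>UNIV. D y * \<nu> y) \<le> (\<Sum>y\<in>UNIV. D yhi * \<nu> y)"
      using nupos Dhi by (intro sum_mono mult_right_mono) (auto intro: less_imp_le)
    also have "\<dots> = D yhi" using ns by (simp add: sum_distrib_left[symmetric])
    finally show ?thesis .
  qed
  have Vle: "(\<Sum>x\<in>UNIV. (\<alpha>2 x - \<alpha>1 x) * \<mu> x) \<le> (\<Sum>y\<in>UNIV. D y * \<nu> y)"
    using valcmp unfolding D_def by (simp add: left_diff_distrib sum_subtractf)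
  define Bb where "Bb = p * (real N * (4 * ln (real N) + 24 * ln (real M)) + ln (real M))"
  have gapB: "Phi K \<mu> v0 - Phi K \<mu> w \<le> Bb"
  proof -
    have "((\<Sum>x\<in>UNIV. (\<alpha>2 x - \<alpha>1 x) * \<mu> x) - \<kappa>) / \<epsilon>2 \<le> (D yhi - D ylo) / \<epsilon>2"
      using Vle sumD eps unfolding \<kappa>_def by (intro divide_right_mono) auto
    also have "\<dots> \<le> (2 * real N + 1) * h / \<epsilon>2" using osc2 eps by (intro divide_right_mono) auto
    also have "\<dots> = p * ((2 * real N + 1) * (2 * ln m + ln (real N)))"
      unfolding h_def p_def m_def by simp
    finally have "Phi K \<mu> v0 - Phi K \<mu> w \<le> p * ((2 * real N + 1) * (2 * ln m + ln (real N))) + (p - 1) * ln m"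
      using Phigap by linarith
    also have "\<dots> \<le> p * (real N * (4 * ln (real N) + 24 * ln m) + ln m)"
      by (rule bound_alg) (use lnm lnN N1 p1 in auto)
    finally show ?thesis unfolding Bb_def m_def .
  qed
  have Bb0: "Bb \<ge> 0" unfolding Bb_def using p1 lnN lnm N1 unfolding m_def by simp
  define Z where "Z = Bb / (1 - qt)"
  have Z0: "Z \<ge> 0" unfolding Z_def using Bb0 qt by simp
  define n0 where "n0 = nat \<lfloor>Z\<rfloor> + 1"
  have n0a: "real n0 > Z" unfolding n0_def using Z0 by linarith
  have n0b: "real n0 \<le> Z + 1" unfolding n0_def using Z0 by linarith
  have Zeq: "Z = (\<epsilon>1 / \<epsilon>2) * ((real N * (4 * ln (real N) + 24 * ln (real M)) + ln (real M)) / (1 - qt))"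
    unfolding Z_def Bb_def p_def by simp
  show ?thesis
  proof (rule ccontr)
    assume "\<not> ?thesis"
    note neg = this
    have small: "sk_q K \<mu> \<nu> v0 n < qt" if "1 \<le> n" "n \<le> n0" for n
    proof (rule ccontr)
      assume "\<not> sk_q K \<mu> \<nu> v0 n < qt"
      hence ge: "sk_q K \<mu> \<nu> v0 n \<ge> qt" by simp
      have "real n \<le> real n0" using that(2) by simp
      hence le: "real n \<le> 2 + (\<epsilon>1 / \<epsilon>2) * ((real N * (4 * ln (real N) + 24 * ln (real M)) + ln (real M)) / (1 - qt))"
        using n0b Zeq by linarith
      have "sk_q (Kern \<epsilon>2 c \<mu> \<nu>) \<mu> \<nu> (\<lambda>y. exp (\<beta>1 y / \<epsilon>2)) n \<ge> qt"
        using ge unfolding K_def v0_def .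
      thus False using neg le that(1) by blast
    qed
    have "real n0 * (1 - qt) = (\<Sum>l<n0. 1 - qt)" by simp
    also have "\<dots> < (\<Sum>l<n0. 1 - sk_q K \<mu> \<nu> v0 (Suc l))"
      by (rule sum_strict_mono) (auto simp: n0_def intro: small)
    also have "\<dots> \<le> Phi K \<mu> v0 - Phi K \<mu> (sk_v K \<mu> \<nu> v0 n0)" by (rule sk.tele[OF v0ge])
    also have "\<dots> \<le> Phi K \<mu> v0 - Phi K \<mu> w" using sk.Phi_mono[OF sk.skv_ge[OF v0ge]] by simp
    also have "\<dots> \<le> Bb" by (rule gapB)
    also have "Bb = Z * (1 - qt)" unfolding Z_def using qt by simp
    finally have "real n0 * (1 - qt) < Z * (1 - qt)" .
    hence "real n0 < Z" using qt by simp
    thus False using n0a by simp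
  qed
qed


end
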